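(* Let $n \ge 1$ and $1 \le k \le n$. For the threshold function $T_k:\{0,1\}^n \to \{0,1\}$ defined by $T_k(x)=1$ if $|x| \ge k$ and $T_k(x)=0$ otherwise, the spectral sensitivity satisfies \[ \lambda(T_k) = \sqrt{k\,(n+1-k)}. \]
   Context: For $x\in\{0,1\}^n$, $|x|$ denotes the Hamming weight (number of ones) of $x$. For a Boolean function $f:\{0,1\}^n\to\{0,1\}$, the sensitivity graph of $f$ is the graph on vertex set $\{0,1\}^n$ in which $x$ and $y$ are adjacent if and only if $x$ and $y$ differ in exactly one coordinate and $f(x)\neq f(y)$. Let $A_f$ denote its adjacency matrix (a symmetric $0/1$ matrix indexed by $\{0,1\}^n$). The spectral sensitivity of $f$ is $\lambda(f)=\|A_f\| = \max_{v:\|v\|_2=1}\|A_f v\|_2$, the spectral norm of $A_f$ (equivalently its largest eigenvalue). *)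

theory Defs
  imports Complex_Main
begin

text \<open>The Boolean cube {0,1}^n is modelled as the set of subsets of {0..<n}:
  a point x corresponds to its support (set of coordinates equal to 1).
  Hamming weight |x| is card x; two points differ in exactly one coordinate
  iff their symmetric difference has exactly one element.\<close>

definition cube :: "nat \<Rightarrow> nat set set" where
  "cube n = Pow {..<n}"

definition hamming_weight :: "nat set \<Rightarrow> nat" where
  "hamming_weight x = card x"

definition sens_adj :: "(nat set \<Rightarrow> bool) \<Rightarrow> nat set \<Rightarrow> nat set \<Rightarrow> bool" where
  "sens_adj f x y \<longleftrightarrow> card ((x - y) \<union> (y - x)) = 1 \<and> f x \<noteq> f y"

definition adj_matrix :: "nat \<Rightarrow> (nat set \<Rightarrow> bool) \<Rightarrow> nat set \<Rightarrow> nat set \<Rightarrow> real" where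
  "adj_matrix n f x y = (if x \<in> cube n \<and> y \<in> cube n \<and> sens_adj f x y then 1 else 0)"

definition mat_vec :: "nat \<Rightarrow> (nat set \<Rightarrow> nat set \<Rightarrow> real) \<Rightarrow> (nat set \<Rightarrow> real) \<Rightarrow> nat set \<Rightarrow> real" where
  "mat_vec n A v x = (\<Sum>y\<in>cube n. A x y * v y)"

definition l2norm :: "nat \<Rightarrow> (nat set \<Rightarrow> real) \<Rightarrow> real" where
  "l2norm n v = sqrt (\<Sum>x\<in>cube n. (v x)\<^sup>2)"

definition spectral_norm :: "nat \<Rightarrow> (nat set \<Rightarrow> nat set \<Rightarrow> real) \<Rightarrow> real" where
  "spectral_norm n A = Sup {l2norm n (mat_vec n A v) | v. l2norm n v = 1}"

definition spectral_sensitivity :: "nat \<Rightarrow> (nat set \<Rightarrow> bool) \<Rightarrow> real" where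
  "spectral_sensitivity n f = spectral_norm n (adj_matrix n f)"

definition threshold :: "nat \<Rightarrow> nat set \<Rightarrow> bool" where
  "threshold k x \<longleftrightarrow> hamming_weight x \<ge> k"

end

theory Submission
  imports Defs "HOL-Analysis.Convex"
begin

lemma cube_finite: "finite (cube n)"
  by (simp add: cube_def)

lemma cube_mem: "x \<in> cube n \<Longrightarrow> x \<subseteq> {..<n} \<and> finite x"
  by (auto simp: cube_def intro: finite_subset)

lemma sd_mem: assumes "(x - y) \<union> (y - x) = {i}" shows "(z \<in> x \<and> z \<notin> y \<or> z \<in> y \<and> z \<notin> x) = (z = i)"
proof -
  have "(z \<in> (x-y) \<union> (y-x)) = (z = i)" unfolding assms by simp
  then show ?thesis by simp
qed

lemma sd_C: assumes "(x - y) \<union> (y - x) = {i}" "i \<notin> x" shows "y = insert i x"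
proof (rule set_eqI)
  fix z show "z \<in> y \<longleftrightarrow> z \<in> insert i x" using sd_mem[OF assms(1), of z] sd_mem[OF assms(1), of i] assms(2) by auto
qed

lemma sd_B: assumes "(x - y) \<union> (y - x) = {i}" "i \<in> x" shows "y = x - {i}"
proof (rule set_eqI)
  fix z show "z \<in> y \<longleftrightarrow> z \<in> x - {i}" using sd_mem[OF assms(1), of z] sd_mem[OF assms(1), of i] assms(2) by auto
qed

lemma sd_D1: "i \<in> x \<Longrightarrow> (x - (x - {i})) \<union> ((x - {i}) - x) = {i}" by auto
lemma sd_D2: "i \<notin> x \<Longrightarrow> (x - insert i x) \<union> (insert i x - x) = {i}" by auto

lemma symdiff_one:
  shows "card ((x - y) \<union> (y - x)) = 1 \<longleftrightarrow>
         (\<exists>i\<in>x. y = x - {i}) \<or> (\<exists>i. i \<notin> x \<and> y = insert i x)"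
proof
  assume "card ((x - y) \<union> (y - x)) = 1"
  then obtain i where i: "(x - y) \<union> (y - x) = {i}" by (auto simp: card_1_singleton_iff)
  show "(\<exists>i\<in>x. y = x - {i}) \<or> (\<exists>i. i \<notin> x \<and> y = insert i x)"
  proof (cases "i \<in> x")
    case True
    then show ?thesis using sd_B[OF i True] by blast
  next
    case False
    then show ?thesis using sd_C[OF i False] by blast
  qed
next
  assume "(\<exists>i\<in>x. y = x - {i}) \<or> (\<exists>i. i \<notin> x \<and> y = insert i x)"
  then show "card ((x - y) \<union> (y - x)) = 1"
  proof
    assume "\<exists>i\<in>x. y = x - {i}"
    then obtain i where i: "i \<in> x" and y: "y = x - {i}" by blast
    show ?thesis unfolding y sd_D1[OF i] by simp
  next
    assume "\<exists>i. i \<notin> x \<and> y = insert i x"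
    then obtain i where i: "i \<notin> x" and y: "y = insert i x" by blast
    show ?thesis unfolding y sd_D2[OF i] by simp
  qed
qed

lemma adj_sym: "adj_matrix n f x y = adj_matrix n f y x"
  by (auto simp: adj_matrix_def sens_adj_def Un_commute)

lemma adj_01: "adj_matrix n f x y = 0 \<or> adj_matrix n f x y = 1"
  by (simp add: adj_matrix_def)

lemma row_lemma:
  assumes x: "x \<in> cube n" and k: "1 \<le> k"
  shows "mat_vec n (adj_matrix n (threshold k)) g x =
    (if card x = k then (\<Sum>i\<in>x. g (x - {i}))
     else if card x = k - 1 then (\<Sum>i\<in>{..<n}-x. g (insert i x)) else 0)"
proof -
  have xs: "x \<subseteq> {..<n}" and fx: "finite x" using cube_mem[OF x] by auto
  have mv: "mat_vec n (adj_matrix n (threshold k)) g x =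
     (\<Sum>y\<in>cube n. if sens_adj (threshold k) x y then g y else 0)"
    unfolding mat_vec_def adj_matrix_def using x by (intro sum.cong) auto
  have chr: "\<And>y. sens_adj (threshold k) x y \<longleftrightarrow>
     ((\<exists>i\<in>x. y = x - {i}) \<or> (\<exists>i. i \<notin> x \<and> y = insert i x)) \<and>
      (k \<le> card x) \<noteq> (k \<le> card y)"
    unfolding sens_adj_def threshold_def hamming_weight_def using symdiff_one[of x] by blast
  show ?thesis
  proof (cases "card x = k")
    case True
    define S where "S = (\<lambda>i. x - {i}) ` x"
    have S: "\<And>y. y \<in> cube n \<Longrightarrow> sens_adj (threshold k) x y \<longleftrightarrow> y \<in> S"
    proof -
      fix y assume "y \<in> cube n"
      show "sens_adj (threshold k) x y \<longleftrightarrow> y \<in> S"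
        unfolding chr S_def using True k fx by (auto simp: card_insert_if)
    qed
    have Ssub: "S \<subseteq> cube n" using xs by (auto simp: S_def cube_def)
    have "mat_vec n (adj_matrix n (threshold k)) g x = (\<Sum>y\<in>cube n. if y \<in> S then g y else 0)"
      unfolding mv using S by (intro sum.cong) auto
    also have "\<dots> = sum g S"
      using sum.inter_restrict[OF cube_finite, of g n S] Ssub by (simp add: Int_absorb1)
    also have "\<dots> = (\<Sum>i\<in>x. g (x - {i}))"
      unfolding S_def by (rule sum.reindex_cong[where l="\<lambda>i. x - {i}"]) (auto simp: inj_on_def)
    finally show ?thesis using True by simp
  next
    case F1: False
    show ?thesis
    proof (cases "card x = k - 1")
      case True
      define S where "S = (\<lambda>i. insert i x) ` ({..<n} - x)"
      have S: "\<And>y. y \<in> cube n \<Longrightarrow> sens_adj (threshold k) x y \<longleftrightarrow> y \<in> S"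
      proof -
        fix y assume y: "y \<in> cube n"
        have "sens_adj (threshold k) x y \<longleftrightarrow> (\<exists>i. i \<notin> x \<and> y = insert i x)"
          unfolding chr using True k fx by (auto simp: card_insert_if)
        also have "\<dots> \<longleftrightarrow> y \<in> S" using y by (auto simp: S_def cube_def)
        finally show "sens_adj (threshold k) x y \<longleftrightarrow> y \<in> S" .
      qed
      have Ssub: "S \<subseteq> cube n" using xs by (auto simp: S_def cube_def)
      have "mat_vec n (adj_matrix n (threshold k)) g x = (\<Sum>y\<in>cube n. if y \<in> S then g y else 0)"
        unfolding mv using S by (intro sum.cong) auto
      also have "\<dots> = sum g S"
        using sum.inter_restrict[OF cube_finite, of g n S] Ssub by (simp add: Int_absorb1)
      also have "\<dots> = (\<Sum>i\<in>{..<n}-x. g (insert i x))"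
        unfolding S_def by (rule sum.reindex_cong[where l="\<lambda>i. insert i x"]) (auto simp: inj_on_def)
      finally show ?thesis using True F1 by simp
    next
      case False
      have "\<And>y. \<not> sens_adj (threshold k) x y"
        unfolding chr using False F1 k fx by (auto simp: card_insert_if)
      then show ?thesis unfolding mv using F1 False by simp
    qed
  qed
qed


lemma deg_lemma:
  assumes x: "x \<in> cube n" and k: "1 \<le> k" "k \<le> n"
  shows "mat_vec n (adj_matrix n (threshold k)) (\<lambda>_. 1) x =
    (if card x = k then real k else if card x = k - 1 then real (n + 1 - k) else 0)"
proof -
  have xs: "x \<subseteq> {..<n}" and fx: "finite x" using cube_mem[OF x] by auto
  have "card ({..<n} - x) = n - card x" using xs by (simp add: card_Diff_subset fx)
  then show ?thesis using row_lemma[OF x k(1), of "\<lambda>_. 1"] k by auto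
qed

lemma adj_sq: "(adj_matrix n f x y)\<^sup>2 = adj_matrix n f x y"
  by (simp add: adj_matrix_def)

lemma upper:
  assumes k: "1 \<le> k" "k \<le> n"
  shows "(\<Sum>x\<in>cube n. (mat_vec n (adj_matrix n (threshold k)) v x)\<^sup>2)
          \<le> real (k * (n + 1 - k)) * (\<Sum>x\<in>cube n. (v x)\<^sup>2)"
proof -
  define A where "A = adj_matrix n (threshold k)"
  define d where "d = mat_vec n A (\<lambda>_. 1)"
  have cs: "(mat_vec n A v x)\<^sup>2 \<le> d x * (\<Sum>y\<in>cube n. A x y * (v y)\<^sup>2)" for x
  proof -
    have "mat_vec n A v x = (\<Sum>y\<in>cube n. A x y * (A x y * v y))"
      unfolding mat_vec_def A_def
      by (intro sum.cong refl) (metis adj_sq mult.assoc power2_eq_square)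
    also have "(\<dots>)\<^sup>2 \<le> (\<Sum>y\<in>cube n. (A x y)\<^sup>2) * (\<Sum>y\<in>cube n. (A x y * v y)\<^sup>2)"
      by (rule Cauchy_Schwarz_ineq_sum)
    also have "\<dots> = d x * (\<Sum>y\<in>cube n. A x y * (v y)\<^sup>2)"
      unfolding d_def mat_vec_def A_def by (simp add: power_mult_distrib adj_sq)
    finally show ?thesis .
  qed
  have col: "(\<Sum>x\<in>cube n. A x y * d x) \<le> real (k * (n + 1 - k))" if y: "y \<in> cube n" for y
  proof -
    have ys: "y \<subseteq> {..<n}" and fy: "finite y" using cube_mem[OF y] by auto
    have "(\<Sum>x\<in>cube n. A x y * d x) = mat_vec n A d y"
      unfolding mat_vec_def A_def by (intro sum.cong refl) (simp add: adj_sym[of n _ _ y])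
    also have "\<dots> = (if card y = k then (\<Sum>i\<in>y. d (y - {i}))
     else if card y = k - 1 then (\<Sum>i\<in>{..<n}-y. d (insert i y)) else 0)"
      unfolding A_def by (rule row_lemma[OF y k(1)])
    also have "\<dots> \<le> real (k * (n + 1 - k))"
    proof -
      have c1: "card y = k \<Longrightarrow> (\<Sum>i\<in>y. d (y - {i})) = real (k * (n + 1 - k))"
      proof -
        assume cy: "card y = k"
        have "\<And>i. i \<in> y \<Longrightarrow> d (y - {i}) = real (n + 1 - k)"
        proof -
          fix i assume i: "i \<in> y"
          have m: "y - {i} \<in> cube n" using ys by (auto simp: cube_def)
          have "card (y - {i}) = k - 1" using cy i fy by simp
          then show "d (y - {i}) = real (n + 1 - k)"
            unfolding d_def A_def using deg_lemma[OF m k] k by auto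
        qed
        then have "(\<Sum>i\<in>y. d (y - {i})) = (\<Sum>i\<in>y. real (n + 1 - k))" by simp
        then show ?thesis using cy by simp
      qed
      have c2: "card y = k - 1 \<Longrightarrow> (\<Sum>i\<in>{..<n}-y. d (insert i y)) = real (k * (n + 1 - k))"
      proof -
        assume cy: "card y = k - 1"
        have "\<And>i. i \<in> {..<n}-y \<Longrightarrow> d (insert i y) = real k"
        proof -
          fix i assume i: "i \<in> {..<n}-y"
          have m: "insert i y \<in> cube n" using ys i by (auto simp: cube_def)
          have "card (insert i y) = k" using cy i fy k by simp
          then show "d (insert i y) = real k"
            unfolding d_def A_def using deg_lemma[OF m k] k by auto
        qed
        then have "(\<Sum>i\<in>{..<n}-y. d (insert i y)) = (\<Sum>i\<in>{..<n}-y. real k)" by simp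
        moreover have "card ({..<n} - y) = n + 1 - k"
          using ys cy k by (simp add: card_Diff_subset fy)
        ultimately show ?thesis by simp
      qed
      show ?thesis using c1 c2 by auto
    qed
    finally show ?thesis .
  qed
  have "(\<Sum>x\<in>cube n. (mat_vec n A v x)\<^sup>2) \<le> (\<Sum>x\<in>cube n. d x * (\<Sum>y\<in>cube n. A x y * (v y)\<^sup>2))"
    by (rule sum_mono) (rule cs)
  also have "\<dots> = (\<Sum>y\<in>cube n. (v y)\<^sup>2 * (\<Sum>x\<in>cube n. A x y * d x))"
  proof -
    have "(\<Sum>x\<in>cube n. d x * (\<Sum>y\<in>cube n. A x y * (v y)\<^sup>2))
        = (\<Sum>x\<in>cube n. \<Sum>y\<in>cube n. (v y)\<^sup>2 * (A x y * d x))"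
      by (simp add: sum_distrib_left mult_ac)
    also have "\<dots> = (\<Sum>y\<in>cube n. \<Sum>x\<in>cube n. (v y)\<^sup>2 * (A x y * d x))"
      by (rule sum.swap)
    also have "\<dots> = (\<Sum>y\<in>cube n. (v y)\<^sup>2 * (\<Sum>x\<in>cube n. A x y * d x))"
      by (simp add: sum_distrib_left)
    finally show ?thesis .
  qed
  also have "\<dots> \<le> (\<Sum>y\<in>cube n. (v y)\<^sup>2 * real (k * (n + 1 - k)))"
    by (rule sum_mono, rule mult_left_mono[OF col]) auto
  also have "\<dots> = real (k * (n + 1 - k)) * (\<Sum>y\<in>cube n. (v y)\<^sup>2)"
    by (simp only: sum_distrib_left mult.commute)
  finally show ?thesis unfolding A_def .
qed


lemma sum_levels:
  assumes k: "1 \<le> k"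
  shows "(\<Sum>x\<in>cube n. (if card x = k - 1 then p else if card x = k then q else 0))
     = p * real (card {x\<in>cube n. card x = k - 1}) + q * real (card {x\<in>cube n. card x = k})"
proof -
  have "(\<Sum>x\<in>cube n. (if card x = k - 1 then p else if card x = k then q else 0))
     = (\<Sum>x\<in>cube n. (if card x = k - 1 then p else 0) + (if card x = k then q else 0))"
    using k by (intro sum.cong refl) auto
  also have "\<dots> = (\<Sum>x\<in>cube n. (if card x = k - 1 then p else 0)) + (\<Sum>x\<in>cube n. (if card x = k then q else 0))"
    by (rule sum.distrib)
  also have "\<dots> = p * real (card {x\<in>cube n. card x = k - 1}) + q * real (card {x\<in>cube n. card x = k})"
    by (simp add: sum.If_cases[OF cube_finite] Int_def)
  finally show ?thesis .
qed

theorem mainTheorem1: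
  fixes n k :: nat
  assumes "1 \<le> n" and "1 \<le> k" and "k \<le> n"
  shows "spectral_sensitivity n (threshold k) = sqrt (real (k * (n + 1 - k)))"
proof -
  define A where "A = adj_matrix n (threshold k)"
  define lam where "lam = sqrt (real (k * (n + 1 - k)))"
  define S where "S = {l2norm n (mat_vec n A v) | v. l2norm n v = 1}"
  have k: "1 \<le> k" "k \<le> n" using assms by auto
  have kk: "k - 1 \<noteq> k" "k \<noteq> k - 1" "k - Suc 0 \<noteq> k" "k \<noteq> k - Suc 0" using k by auto
  have ub: "s \<le> lam" if sS: "s \<in> S" for s
  proof -
    obtain v where s: "s = l2norm n (mat_vec n A v)" and v: "l2norm n v = 1"
      using sS unfolding S_def by blast
    have v1: "(\<Sum>x\<in>cube n. (v x)\<^sup>2) = 1"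
      using v unfolding l2norm_def by (simp add: sum_nonneg)
    have "s = sqrt (\<Sum>x\<in>cube n. (mat_vec n A v x)\<^sup>2)" by (simp add: s l2norm_def)
    also have "\<dots> \<le> sqrt (real (k * (n + 1 - k)) * (\<Sum>x\<in>cube n. (v x)\<^sup>2))"
      unfolding A_def by (rule real_sqrt_le_mono[OF upper[OF k]])
    finally show ?thesis using v1 by (simp add: lam_def)
  qed
  define a where "a = real (n + 1 - k)"
  define b where "b = real k"
  define cL where "cL = real (card {x\<in>cube n. card x = k - 1})"
  define cU where "cU = real (card {x\<in>cube n. card x = k})"
  have a0: "a > 0" using k by (simp add: a_def)
  have b0: "b > 0" using k by (simp add: b_def)
  have mem: "{..<k} \<in> {x\<in>cube n. card x = k}" using k by (auto simp: cube_def)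
  have fin: "finite {x\<in>cube n. card x = k}" using cube_finite[of n] by simp
  have "card {x\<in>cube n. card x = k} \<noteq> 0"
    unfolding card_0_eq[OF fin] using mem by blast
  then have cU0: "cU > 0" by (simp add: cU_def)
  have cL0: "cL \<ge> 0" by (simp add: cL_def)
  define N where "N = a * cL + b * cU"
  have N0: "N > 0" unfolding N_def using a0 b0 cU0 cL0 by (simp add: add_nonneg_pos)
  define al where "al = sqrt (a / N)"
  define be where "be = sqrt (b / N)"
  have al2: "al\<^sup>2 = a / N" using a0 N0 by (simp add: al_def)
  have be2: "be\<^sup>2 = b / N" using b0 N0 by (simp add: be_def)
  define v where "v = (\<lambda>x::nat set. if card x = k - 1 then al else if card x = k then be else (0::real))"
  have Av: "mat_vec n A v x = (if card x = k - 1 then a * be else if card x = k then b * al else 0)"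
    if x: "x \<in> cube n" for x
  proof -
    have fx: "finite x" and xs: "x \<subseteq> {..<n}" using cube_mem[OF x] by auto
    have r: "mat_vec n A v x = (if card x = k then (\<Sum>i\<in>x. v (x - {i}))
     else if card x = k - 1 then (\<Sum>i\<in>{..<n}-x. v (insert i x)) else 0)"
      unfolding A_def by (rule row_lemma[OF x k(1)])
    show ?thesis
    proof (cases "card x = k")
      case True
      have "\<And>i. i \<in> x \<Longrightarrow> v (x - {i}) = al" using True fx k kk by (simp add: v_def)
      then have "(\<Sum>i\<in>x. v (x - {i})) = b * al" using True by (simp add: b_def)
      then show ?thesis using r True k by auto
    next
      case F: False
      show ?thesis
      proof (cases "card x = k - 1")
        case True
        have "\<And>i. i \<in> {..<n}-x \<Longrightarrow> v (insert i x) = be" using True fx k kk by (simp add: v_def)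
        then have "(\<Sum>i\<in>{..<n}-x. v (insert i x)) = real (card ({..<n}-x)) * be" by simp
        moreover have "card ({..<n} - x) = n + 1 - k"
          using xs True k by (simp add: card_Diff_subset fx)
        ultimately show ?thesis using r True F by (simp add: a_def)
      next
        case False
        then show ?thesis using r F by simp
      qed
    qed
  qed
  have vn: "(\<Sum>x\<in>cube n. (v x)\<^sup>2) = 1"
  proof -
    have "(\<Sum>x\<in>cube n. (v x)\<^sup>2) = (\<Sum>x\<in>cube n. (if card x = k - 1 then al\<^sup>2 else if card x = k then be\<^sup>2 else 0))"
      by (intro sum.cong refl) (simp add: v_def)
    also have "\<dots> = al\<^sup>2 * cL + be\<^sup>2 * cU" unfolding cL_def cU_def by (rule sum_levels[OF k(1)])
    also have "\<dots> = (a * cL + b * cU) / N" unfolding al2 be2 by (simp add: add_divide_distrib)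
    also have "\<dots> = 1" using N0 N_def by simp
    finally show ?thesis .
  qed
  have Avn: "(\<Sum>x\<in>cube n. (mat_vec n A v x)\<^sup>2) = a * b"
  proof -
    have "(\<Sum>x\<in>cube n. (mat_vec n A v x)\<^sup>2) = (\<Sum>x\<in>cube n. (if card x = k - 1 then (a * be)\<^sup>2 else if card x = k then (b * al)\<^sup>2 else 0))"
      by (intro sum.cong refl) (simp add: Av)
    also have "\<dots> = (a * be)\<^sup>2 * cL + (b * al)\<^sup>2 * cU" unfolding cL_def cU_def by (rule sum_levels[OF k(1)])
    also have "\<dots> = a * b * (N / N)"
    proof -
      have M: "a * cL + b * cU \<noteq> 0" using N0 N_def by simp
      show ?thesis unfolding power_mult_distrib unfolding al2 be2 unfolding divide_inverse power2_eq_square N_def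
        by (simp add: algebra_simps)
    qed
    also have "\<dots> = a * b" using N0 by simp
    finally show ?thesis .
  qed
  have "lam \<in> S"
  proof -
    have "l2norm n v = 1" using vn by (simp add: l2norm_def)
    moreover have "l2norm n (mat_vec n A v) = lam"
      using Avn by (simp add: l2norm_def lam_def a_def b_def mult.commute)
    ultimately show ?thesis unfolding S_def by blast
  qed
  then have "Sup S = lam" using ub by (intro cSup_eq_maximum) auto
  then show ?thesis by (simp add: spectral_sensitivity_def spectral_norm_def S_def A_def lam_def)
qed

end
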